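(* Let $\mathbf B\in\mathbb R_+^{m\times n}$, $\mathbf d\in\mathbb R^n_+$ and $\mathcal J\subseteq[m]$. For $\mathbf h\in\mathbb R^m_+$ let $z(\mathbf h)=\min_{\mathbf y\ge\mathbf 0}\{\mathbf d^T\mathbf y \mid \mathbf B\mathbf y\ge\mathbf h\}$, and for $\mathcal W\subseteq[m]$ write $z(\mathcal W)=z(\sum_{i\in\mathcal W}\mathbf e_i)$. Suppose there exist $\gamma>0$ and $w_i\in(0,1]$ for all $i\in\mathcal J$ such that: (1) for all $i\in\mathcal J$, $\dfrac{z(\mathbf e_i)}{w_i}>4\gamma\cdot\dfrac{\log n}{\log\log n}$; (2) for all $\mathcal W\subseteq\mathcal J$, $\sum_{i\in\mathcal W}w_i\le 1$ implies $z(\mathcal W)\le\gamma$. Then $z(\mathcal J)\le 4\gamma\cdot\dfrac{\log n}{\log\log n}$.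
   Context: $\mathbf e_i$ denotes the $i$-th standard basis vector of $\mathbb R^m$; $n$ is the number of columns of $\mathbf B$. *)

theory Defs
  imports Complex_Main "HOL-Library.Extended_Real"
begin

text \<open>B is an m x n matrix (rows indexed by i < m, columns by j < n),
  d a cost vector of length n, h a right-hand side of length m.
  z(h) = min { d^T y | y >= 0, B y >= h }, taken in the extended reals
  (infimum of the empty set, i.e. an infeasible LP, is +infinity).\<close>
definition lp_val :: "nat \<Rightarrow> nat \<Rightarrow> (nat \<Rightarrow> nat \<Rightarrow> real) \<Rightarrow> (nat \<Rightarrow> real) \<Rightarrow> (nat \<Rightarrow> real) \<Rightarrow> ereal" where
  "lp_val m n B d h = Inf {ereal (\<Sum>j<n. d j * y j) | y.
      (\<forall>j<n. 0 \<le> y j) \<and> (\<forall>i<m. h i \<le> (\<Sum>j<n. B i j * y j))}"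

definition unit_vec :: "nat \<Rightarrow> nat \<Rightarrow> real" where
  "unit_vec i = (\<lambda>k. if k = i then 1 else 0)"

definition lp_val_set :: "nat \<Rightarrow> nat \<Rightarrow> (nat \<Rightarrow> nat \<Rightarrow> real) \<Rightarrow> (nat \<Rightarrow> real) \<Rightarrow> nat set \<Rightarrow> ereal" where
  "lp_val_set m n B d W = lp_val m n B d (\<lambda>k. \<Sum>i\<in>W. unit_vec i k)"

end

theory Submission
  imports Defs "HOL-Analysis.Analysis"
begin

lemma lp_val_upper:
  assumes "\<forall>j<n. 0 \<le> y j" and "\<forall>i<m. h i \<le> (\<Sum>j<n. B i j * y j)"
  shows "lp_val m n B d h \<le> ereal (\<Sum>j<n. d j * y j)"
  unfolding lp_val_def using assms by (intro Inf_lower) blast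

lemma lp_val_nonneg:
  assumes "\<forall>j<n. 0 \<le> d j"
  shows "0 \<le> lp_val m n B d h"
  unfolding lp_val_def
proof (rule Inf_greatest)
  fix x assume "x \<in> {ereal (\<Sum>j<n. d j * y j) | y.
      (\<forall>j<n. 0 \<le> y j) \<and> (\<forall>i<m. h i \<le> (\<Sum>j<n. B i j * y j))}"
  then obtain y where x: "x = ereal (\<Sum>j<n. d j * y j)" and y: "\<forall>j<n. 0 \<le> y j" by blast
  have "0 \<le> (\<Sum>j<n. d j * y j)" using assms y by (intro sum_nonneg) simp
  then show "0 \<le> x" using x by simp
qed

lemma sum_unit_vec: "finite W \<Longrightarrow> (\<Sum>i\<in>W. unit_vec i k) = (if k \<in> W then 1 else 0)"
  unfolding unit_vec_def by (simp add: sum.delta)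

lemma weak_dual:
  assumes W: "W \<subseteq> {..<m}" "finite W"
    and c: "\<forall>i\<in>W. 0 \<le> c i"
    and feas: "\<forall>j<n. (\<Sum>i\<in>W. c i * B i j) \<le> d j"
  shows "ereal (\<Sum>i\<in>W. c i) \<le> lp_val_set m n B d W"
  unfolding lp_val_set_def lp_val_def
proof (rule Inf_greatest)
  fix x assume "x \<in> {ereal (\<Sum>j<n. d j * y j) | y.
      (\<forall>j<n. 0 \<le> y j) \<and> (\<forall>i<m. (\<Sum>i'\<in>W. unit_vec i' i) \<le> (\<Sum>j<n. B i j * y j))}"
  then obtain y where x: "x = ereal (\<Sum>j<n. d j * y j)" and y: "\<forall>j<n. 0 \<le> y j"
    and cov: "\<forall>i<m. (\<Sum>i'\<in>W. unit_vec i' i) \<le> (\<Sum>j<n. B i j * y j)" by blast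
  have cov1: "1 \<le> (\<Sum>j<n. B i j * y j)" if "i \<in> W" for i
    using cov[rule_format, of i] that W sum_unit_vec[OF W(2), of i] by auto
  have "(\<Sum>i\<in>W. c i) \<le> (\<Sum>i\<in>W. c i * (\<Sum>j<n. B i j * y j))"
  proof (intro sum_mono)
    fix i assume "i \<in> W"
    then show "c i \<le> c i * (\<Sum>j<n. B i j * y j)"
      using mult_left_mono[OF cov1[OF \<open>i \<in> W\<close>], of "c i"] c by simp
  qed
  also have "\<dots> = (\<Sum>j<n. (\<Sum>i\<in>W. c i * B i j) * y j)"
    by (simp add: sum_distrib_left sum_distrib_right mult.assoc sum.swap[where A=W])
  also have "\<dots> \<le> (\<Sum>j<n. d j * y j)"
    by (intro sum_mono mult_right_mono) (use feas y in auto)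
  finally show "ereal (\<Sum>i\<in>W. c i) \<le> x" using x by simp
qed

lemma exp_convex_bound:
  fixes a l :: real
  assumes "0 \<le> a" "a \<le> 1" "0 \<le> l"
  shows "exp (l * a) \<le> 1 + a * (exp l - 1)"
proof -
  have "exp ((1 - a) *\<^sub>R 0 + a *\<^sub>R l) \<le> (1 - a) * exp 0 + a * exp l"
    using assms by (intro convex_onD[OF exp_convex]) auto
  then show ?thesis by (simp add: algebra_simps)
qed

theorem lemma4:
  fixes m n :: nat and B :: "nat \<Rightarrow> nat \<Rightarrow> real" and d :: "nat \<Rightarrow> real"
    and J :: "nat set" and \<gamma> :: real and w :: "nat \<Rightarrow> real"
  assumes B_nonneg: "\<forall>i<m. \<forall>j<n. 0 \<le> B i j"
    and d_nonneg: "\<forall>j<n. 0 \<le> d j"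
    and J_sub: "J \<subseteq> {..<m}"
    and n_ge: "n \<ge> 3"
    and gamma_pos: "\<gamma> > 0"
    and w_range: "\<forall>i\<in>J. 0 < w i \<and> w i \<le> 1"
    and cond1: "\<forall>i\<in>J. lp_val m n B d (unit_vec i) / ereal (w i)
                   > ereal (4 * \<gamma> * (ln (real n) / ln (ln (real n))))"
    and cond2: "\<forall>W. W \<subseteq> J \<longrightarrow> (\<Sum>i\<in>W. w i) \<le> 1 \<longrightarrow> lp_val_set m n B d W \<le> ereal \<gamma>"
  shows "lp_val_set m n B d J \<le> ereal (4 * \<gamma> * (ln (real n) / ln (ln (real n))))"
proof (rule ccontr)
  define C where "C = 4 * \<gamma> * (ln (real n) / ln (ln (real n)))"
  assume "\<not> ?thesis"
  then have negC: "ereal C < lp_val_set m n B d J" unfolding C_def by simp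
  have finJ: "finite J" using J_sub finite_subset by blast
  have n3: "3 \<le> real n" using n_ge by simp
  have "exp 1 < real n" using e_less_272 n3 by linarith
  then have ln1: "1 < ln (real n)"
    using ln_less_cancel_iff[of "exp 1" "real n"] n3 by simp
  define lam where "lam = ln (ln (real n))"
  have lam_pos: "0 < lam" using ln1 by (simp add: lam_def)
  have explam: "exp lam = ln (real n)" using ln1 by (simp add: lam_def)
  have lam_lt: "lam < ln (real n)" using ln1 by (simp add: lam_def ln_less_self)
  define beta where "beta = ln (real n) - 1"
  have beta_nn: "0 \<le> beta" using ln1 by (simp add: beta_def)
  have C_eq: "C = 4 * \<gamma> * (ln (real n) / lam)" by (simp add: C_def lam_def)
  have C_pos: "0 < C" using C_eq gamma_pos lam_pos ln1 by simp
  define z where "z i = real_of_ereal (lp_val m n B d (unit_vec i))" for i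
  have zeq: "lp_val m n B d (unit_vec i) = ereal (z i)" and zle: "z i \<le> \<gamma>"
    if iJ: "i \<in> J" for i
  proof -
    have "lp_val_set m n B d {i} \<le> ereal \<gamma>"
      using cond2 iJ w_range by auto
    moreover have "lp_val_set m n B d {i} = lp_val m n B d (unit_vec i)"
      unfolding lp_val_set_def by simp
    ultimately have u: "lp_val m n B d (unit_vec i) \<le> ereal \<gamma>" by simp
    have l: "0 \<le> lp_val m n B d (unit_vec i)" using lp_val_nonneg d_nonneg by blast
    from u l show "lp_val m n B d (unit_vec i) = ereal (z i)"
      unfolding z_def by (cases "lp_val m n B d (unit_vec i)") auto
    with u show "z i \<le> \<gamma>" by simp
  qed
  have wlt: "w i < z i / C" and zpos: "0 < z i" if iJ: "i \<in> J" for i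
  proof -
    have h: "ereal C < lp_val m n B d (unit_vec i) / ereal (w i)"
      using cond1 iJ unfolding C_def by blast
    have "ereal C < ereal (z i) / ereal (w i)"
      using h unfolding zeq[OF iJ] .
    moreover have "w i \<noteq> 0" using w_range iJ by force
    ultimately have "C < z i / w i" by simp
    then have "C * w i < z i" using w_range iJ by (simp add: pos_less_divide_eq)
    then show "w i < z i / C" using C_pos by (simp add: pos_less_divide_eq mult.commute)
    have "0 < C * w i" using C_pos w_range iJ by simp
    then show "0 < z i" using \<open>C * w i < z i\<close> by linarith
  qed
  have zB: "z i * B i j \<le> d j" if iJ: "i \<in> J" and j: "j < n" for i j
  proof (cases "B i j = 0")
    case True then show ?thesis using d_nonneg j by simp
  next
    case False
    then have Bp: "0 < B i j" using B_nonneg iJ J_sub j by force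
    define y where "y k = (if k = j then 1 / B i j else 0)" for k
    have s: "(\<Sum>j'<n. f j' * y j') = f j / B i j" for f :: "nat \<Rightarrow> real"
    proof -
      have "(\<Sum>j'<n. f j' * y j') = (\<Sum>j'<n. if j' = j then f j / B i j else 0)"
        by (intro sum.cong) (auto simp: y_def)
      also have "\<dots> = f j / B i j" using j by simp
      finally show ?thesis .
    qed
    have "lp_val m n B d (unit_vec i) \<le> ereal (\<Sum>j'<n. d j' * y j')"
    proof (rule lp_val_upper)
      show "\<forall>j<n. 0 \<le> y j" using Bp by (simp add: y_def)
      show "\<forall>k<m. unit_vec i k \<le> (\<Sum>j<n. B k j * y j)"
      proof (intro allI impI)
        fix k assume k: "k < m"
        have "(\<Sum>j'<n. B k j' * y j') = B k j / B i j" by (rule s)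
        then show "unit_vec i k \<le> (\<Sum>j<n. B k j * y j)"
          using Bp B_nonneg k j by (auto simp: unit_vec_def)
      qed
    qed
    then have "z i \<le> d j / B i j" using zeq[OF iJ] s[of d] by simp
    then show ?thesis using Bp by (simp add: pos_le_divide_eq)
  qed
  define a where "a i j = (if 0 < d j then z i * B i j / d j else 0)" for i j
  have a01: "0 \<le> a i j \<and> a i j \<le> 1" if "i \<in> J" "j < n" for i j
  proof -
    have "0 \<le> B i j" using B_nonneg J_sub that by auto
    then have "0 \<le> z i * B i j" using zpos[OF that(1)] by simp
    then show ?thesis using zB[OF that] unfolding a_def by (simp add: divide_le_eq_1)
  qed
  have Bzero: "B i j = 0" if "i \<in> J" "j < n" "\<not> 0 < d j" for i j
  proof -
    have "d j = 0" using d_nonneg that by force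
    then have "z i * B i j \<le> 0" using zB[OF that(1,2)] by simp
    moreover have "0 \<le> B i j" using B_nonneg J_sub that by auto
    ultimately show ?thesis using zpos[OF that(1)] by (simp add: mult_le_0_iff)
  qed
  have zBa: "z i * B i j = a i j * d j" if "i \<in> J" "j < n" for i j
    using Bzero[OF that] by (auto simp: a_def)
  have key: "\<exists>i\<in>J. (\<Sum>j<n. a i j * p j) < z i * (\<Sum>j<n. p j) / C"
    if p_nn: "\<forall>j<n. 0 \<le> p j" and P_pos: "0 < (\<Sum>j<n. p j)" for p
  proof (rule ccontr)
    assume "\<not> ?thesis"
    then have big: "z i * (\<Sum>j<n. p j) / C \<le> (\<Sum>j<n. a i j * p j)" if "i \<in> J" for i
      using that by force
    define P where "P = (\<Sum>j<n. p j)"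
    define y where "y j = (if 0 < d j then C * p j / (P * d j) else 0)" for j
    have "lp_val_set m n B d J \<le> ereal (\<Sum>j<n. d j * y j)"
      unfolding lp_val_set_def
    proof (rule lp_val_upper)
      show "\<forall>j<n. 0 \<le> y j" using p_nn C_pos P_pos by (simp add: y_def P_def)
      show "\<forall>k<m. (\<Sum>i\<in>J. unit_vec i k) \<le> (\<Sum>j<n. B k j * y j)"
      proof (intro allI impI)
        fix k assume k: "k < m"
        show "(\<Sum>i\<in>J. unit_vec i k) \<le> (\<Sum>j<n. B k j * y j)"
        proof (cases "k \<in> J")
          case False
          have "0 \<le> (\<Sum>j<n. B k j * y j)"
            using B_nonneg k p_nn C_pos P_pos d_nonneg
            by (intro sum_nonneg) (simp add: y_def P_def)
          then show ?thesis using False sum_unit_vec[OF finJ] by simp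
        next
          case True
          have eq: "(\<Sum>j<n. B k j * y j) = C / (P * z k) * (\<Sum>j<n. a k j * p j)"
            unfolding sum_distrib_left
          proof (intro sum.cong refl)
            fix j assume "j \<in> {..<n}"
            then have j: "j < n" by simp
            show "B k j * y j = C / (P * z k) * (a k j * p j)"
            proof (cases "0 < d j")
              case True
              then show ?thesis using zpos[OF \<open>k \<in> J\<close>]
                by (simp add: y_def a_def field_simps)
            next
              case False
              then show ?thesis using Bzero[OF \<open>k \<in> J\<close> j False]
                by (simp add: y_def a_def)
            qed
          qed
          have "1 \<le> C / (P * z k) * (\<Sum>j<n. a k j * p j)"
          proof -
            have "C / (P * z k) * (z k * P / C) = 1"
              using zpos[OF True] C_pos P_pos by (simp add: P_def field_simps)
            moreover have "C / (P * z k) * (z k * P / C) \<le> C / (P * z k) * (\<Sum>j<n. a k j * p j)"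
              using big[OF True] zpos[OF True] C_pos P_pos
              by (intro mult_left_mono) (auto simp: P_def)
            ultimately show ?thesis by simp
          qed
          then show ?thesis using True eq sum_unit_vec[OF finJ] by simp
        qed
      qed
    qed
    also have "(\<Sum>j<n. d j * y j) \<le> (\<Sum>j<n. C * p j / P)"
      using C_pos P_pos p_nn by (intro sum_mono) (auto simp: y_def P_def)
    also have "(\<Sum>j<n. C * p j / P) = C"
      using P_pos by (simp add: P_def sum_divide_distrib[symmetric] sum_distrib_left[symmetric])
    finally show False using negC by simp
  qed
  define ell where "ell mu j = (\<Sum>i\<in>J. real (mu i) * a i j)" for mu :: "nat \<Rightarrow> nat" and j
  define Phi where "Phi mu = (\<Sum>j<n. exp (lam * ell mu j))" for mu
  define Z where "Z mu = (\<Sum>i\<in>J. real (mu i) * z i)" for mu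
  have upd: "(\<Sum>i'\<in>J. real ((mu(i := Suc (mu i))) i') * f i') = (\<Sum>i'\<in>J. real (mu i') * f i') + f i"
    if iJ: "i \<in> J" for mu i and f :: "nat \<Rightarrow> real"
  proof -
    let ?g = "\<lambda>i'. real ((mu(i := Suc (mu i))) i') * f i'"
    let ?h = "\<lambda>i'. real (mu i') * f i'"
    have a1: "sum ?g J = ?g i + sum ?g (J - {i})" by (rule sum.remove[OF finJ iJ])
    have a2: "sum ?h J = ?h i + sum ?h (J - {i})" by (rule sum.remove[OF finJ iJ])
    have a3: "sum ?g (J - {i}) = sum ?h (J - {i})" by (intro sum.cong) auto
    show ?thesis using a1 a2 a3 by (simp add: algebra_simps)
  qed
  have Phi_pos: "0 < Phi mu" for mu
  proof -
    have "0 \<in> {..<n}" using n_ge by simp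
    then have "{..<n} \<noteq> {}" by blast
    then show ?thesis unfolding Phi_def by (intro sum_pos) auto
  qed
  obtain i0 where "i0 \<in> J"
    using key[of "\<lambda>_. 1"] n_ge by auto
  define zmin where "zmin = Min (z ` J)"
  have zmin_pos: "0 < zmin" and zmin_le: "\<And>i. i \<in> J \<Longrightarrow> zmin \<le> z i"
  proof -
    have ne: "z ` J \<noteq> {}" using \<open>i0 \<in> J\<close> by blast
    show "0 < zmin" unfolding zmin_def using finJ ne zpos by (subst Min_gr_iff) auto
    show "\<And>i. i \<in> J \<Longrightarrow> zmin \<le> z i" unfolding zmin_def using finJ by simp
  qed
  have iter: "\<exists>mu. Phi mu \<le> real n * exp (beta * Z mu / C) \<and> Z mu \<le> C \<and>
      (C - \<gamma> < Z mu \<or> real k * zmin \<le> Z mu)" for k :: nat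
  proof (induction k)
    case 0
    have "Phi (\<lambda>_. 0) = real n" by (simp add: Phi_def ell_def)
    moreover have "Z (\<lambda>_. 0) = 0" by (simp add: Z_def)
    ultimately show ?case using C_pos by (intro exI[of _ "\<lambda>_. 0"]) simp
  next
    case (Suc k)
    then obtain mu where inv: "Phi mu \<le> real n * exp (beta * Z mu / C)" and ZC: "Z mu \<le> C"
      and alt: "C - \<gamma> < Z mu \<or> real k * zmin \<le> Z mu" by blast
    show ?case
    proof (cases "C - \<gamma> < Z mu")
      case True then show ?thesis using inv ZC by blast
    next
      case False
      with alt have kz: "real k * zmin \<le> Z mu" by simp
      define p where "p j = exp (lam * ell mu j)" for j
      have "\<exists>i\<in>J. (\<Sum>j<n. a i j * p j) < z i * (\<Sum>j<n. p j) / C"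
        using Phi_pos[of mu] by (intro key) (auto simp: p_def Phi_def)
      then obtain i where iJ: "i \<in> J" and sel: "(\<Sum>j<n. a i j * p j) < z i * Phi mu / C"
        by (auto simp: p_def Phi_def)
      define mu' where "mu' = mu(i := Suc (mu i))"
      have Z': "Z mu' = Z mu + z i" unfolding Z_def mu'_def using upd[OF iJ] .
      have ell': "ell mu' j = ell mu j + a i j" for j unfolding ell_def mu'_def using upd[OF iJ] .
      have "Phi mu' = (\<Sum>j<n. p j * exp (lam * a i j))"
        unfolding Phi_def ell' p_def by (simp add: distrib_left exp_add)
      also have "\<dots> \<le> (\<Sum>j<n. p j * (1 + a i j * beta))"
      proof (intro sum_mono mult_left_mono)
        fix j assume "j \<in> {..<n}"
        then have "exp (lam * a i j) \<le> 1 + a i j * (exp lam - 1)"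
          using a01[OF iJ] lam_pos by (intro exp_convex_bound) auto
        then show "exp (lam * a i j) \<le> 1 + a i j * beta" by (simp add: explam beta_def)
        show "0 \<le> p j" by (simp add: p_def)
      qed
      also have "\<dots> = Phi mu + beta * (\<Sum>j<n. a i j * p j)"
        by (simp add: Phi_def p_def algebra_simps sum.distrib sum_distrib_left)
      also have "\<dots> \<le> Phi mu + beta * (z i * Phi mu / C)"
        using sel beta_nn by (intro add_left_mono mult_left_mono) auto
      also have "\<dots> = Phi mu * (1 + beta * z i / C)" by (simp add: algebra_simps)
      also have "\<dots> \<le> Phi mu * exp (beta * z i / C)"
        using Phi_pos[of mu] by (intro mult_left_mono) (auto simp: exp_ge_add_one_self add.commute)
      also have "\<dots> \<le> real n * exp (beta * Z mu / C) * exp (beta * z i / C)"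
        using inv by (intro mult_right_mono) auto
      also have "\<dots> = real n * exp (beta * Z mu' / C)"
        by (simp add: Z' exp_add[symmetric] add_divide_distrib distrib_left)
      finally have inv': "Phi mu' \<le> real n * exp (beta * Z mu' / C)" .
      have "Z mu' \<le> C" using Z' False zle[OF iJ] by simp
      moreover have "real (Suc k) * zmin \<le> Z mu'" using Z' kz zmin_le[OF iJ] by (simp add: algebra_simps)
      ultimately show ?thesis using inv' by blast
    qed
  qed
  obtain k :: nat where kbig: "C / zmin < real k" using reals_Archimedean2 by blast
  then have "C < real k * zmin" using zmin_pos by (simp add: pos_divide_less_eq)
  then obtain mu where inv: "Phi mu \<le> real n * exp (beta * Z mu / C)" and ZC: "Z mu \<le> C"
    and Zlow: "C - \<gamma> < Z mu" using iter[of k] by force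
  define b where "b = (2 * ln (real n) - 1) / lam"
  have b_pos: "0 < b" using ln1 lam_pos by (simp add: b_def)
  have Phi_le: "Phi mu \<le> exp (ln (real n) + beta)"
  proof -
    have "beta * Z mu / C \<le> beta"
    proof -
      have "beta * Z mu \<le> beta * C" using ZC beta_nn by (rule mult_left_mono)
      then show ?thesis using C_pos by (simp add: divide_le_eq mult.commute)
    qed
    then have "Phi mu \<le> real n * exp beta" using inv n_ge
      by (smt (verit) exp_le_cancel_iff mult_left_mono of_nat_0_le_iff)
    also have "real n * exp beta = exp (ln (real n) + beta)" using n3 by (simp add: exp_add)
    finally show ?thesis .
  qed
  have ell_le: "ell mu j \<le> b" if j: "j < n" for j
  proof -
    have "exp (lam * ell mu j) \<le> Phi mu"
      unfolding Phi_def using j by (intro member_le_sum) auto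
    then have "exp (lam * ell mu j) \<le> exp (ln (real n) + beta)" using Phi_le by linarith
    then have "lam * ell mu j \<le> 2 * ln (real n) - 1" by (simp add: beta_def)
    then show ?thesis using lam_pos by (simp add: b_def pos_le_divide_eq mult.commute)
  qed
  define W where "W = {i \<in> J. 0 < mu i}"
  have WJ: "W \<subseteq> J" and finW: "finite W" using finJ by (auto simp: W_def)
  define c where "c i = real (mu i) * z i / b" for i
  have sumW: "(\<Sum>i\<in>W. f i) = (\<Sum>i\<in>J. f i)" if "\<And>i. mu i = 0 \<Longrightarrow> f i = 0" for f :: "nat \<Rightarrow> real"
    using finJ that by (intro sum.mono_neutral_left) (auto simp: W_def)
  have feas: "\<forall>j<n. (\<Sum>i\<in>W. c i * B i j) \<le> d j"
  proof (intro allI impI)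
    fix j assume j: "j < n"
    have "(\<Sum>i\<in>W. c i * B i j) = (\<Sum>i\<in>J. c i * B i j)" by (rule sumW) (simp add: c_def)
    also have "\<dots> = (\<Sum>i\<in>J. real (mu i) * a i j) * d j / b"
      unfolding sum_distrib_right sum_divide_distrib
      by (intro sum.cong refl) (use zBa j in \<open>auto simp: c_def algebra_simps\<close>)
    also have "\<dots> \<le> d j"
    proof -
      have "(\<Sum>i\<in>J. real (mu i) * a i j) * d j \<le> b * d j"
        using ell_le[OF j] d_nonneg j unfolding ell_def by (intro mult_right_mono) auto
      then show ?thesis using b_pos by (simp add: divide_le_eq mult.commute)
    qed
    finally show "(\<Sum>i\<in>W. c i * B i j) \<le> d j" .
  qed
  have c_nn: "\<forall>i\<in>W. 0 \<le> c i"
  proof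
    fix i assume "i \<in> W"
    then have "0 < z i" using zpos WJ by blast
    then show "0 \<le> c i" using b_pos by (simp add: c_def)
  qed
  have "ereal (\<Sum>i\<in>W. c i) \<le> lp_val_set m n B d W"
    using WJ J_sub finW feas c_nn by (intro weak_dual) auto
  moreover have "(\<Sum>i\<in>W. c i) = Z mu / b"
    by (subst sumW) (auto simp: c_def Z_def sum_divide_distrib)
  moreover have "\<gamma> < Z mu / b"
  proof -
    have "2 * ln (real n) - 1 < 4 * ln (real n) - lam" using lam_lt ln1 by linarith
    then have "(2 * ln (real n) - 1) / lam < (4 * ln (real n) - lam) / lam"
      using lam_pos by (simp add: divide_strict_right_mono)
    moreover have "(4 * ln (real n) - lam) / lam = 4 * (ln (real n) / lam) - 1"
      using lam_pos by (simp add: field_simps)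
    ultimately have "b < 4 * (ln (real n) / lam) - 1" by (simp add: b_def)
    then have "\<gamma> * b < \<gamma> * (4 * (ln (real n) / lam) - 1)"
      using gamma_pos by (rule mult_strict_left_mono)
    also have "\<gamma> * (4 * (ln (real n) / lam) - 1) = C - \<gamma>"
      using C_eq by (simp add: algebra_simps)
    finally have "\<gamma> * b < C - \<gamma>" .
    then have "\<gamma> * b < Z mu" using Zlow by linarith
    then show ?thesis using b_pos by (simp add: pos_less_divide_eq)
  qed
  moreover have "lp_val_set m n B d W \<le> ereal \<gamma>"
  proof -
    have "(\<Sum>i\<in>W. w i) \<le> (\<Sum>i\<in>W. real (mu i) * z i / C)"
    proof (intro sum_mono)
      fix i assume iW: "i \<in> W"
      then have iJ: "i \<in> J" and mu1: "1 \<le> real (mu i)" by (auto simp: W_def)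
      have "w i \<le> z i / C" using wlt[OF iJ] by simp
      also have "\<dots> \<le> real (mu i) * (z i / C)"
      proof -
        have "0 \<le> z i / C" using zpos[OF iJ] C_pos by simp
        then show ?thesis using mult_right_mono[OF mu1, of "z i / C"] by simp
      qed
      finally show "w i \<le> real (mu i) * z i / C" by simp
    qed
    also have "\<dots> = Z mu / C" by (subst sumW) (auto simp: Z_def sum_divide_distrib)
    also have "\<dots> \<le> 1" using ZC C_pos by simp
    finally show ?thesis using cond2 WJ by blast
  qed
  ultimately have "ereal (Z mu / b) \<le> ereal \<gamma>" "\<gamma> < Z mu / b"
    by (metis order.trans, simp)
  then show False by simp
qed

end
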